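(* Let $A$ be a finite group and let $G$ be a finite group containing $A$ and an element $c$ of order $n$ with $A\cap\langle c\rangle=\{1_G\}$ and $G=A\langle c\rangle$. For $x\in A$ let $\varphi(x)\in A$ and $\Pi(x)\in\mathbb{Z}_n$ be the unique elements with $cx=\varphi(x)c^{\Pi(x)}$, and let $m$ be the order of $\varphi$ (which is a skew-morphism of $A$ with power function $\pi$). Then: (a) $\langle c^m\rangle$ is a normal subgroup of $G$ and $G/\langle c^m\rangle$ is isomorphic to the skew product $A\langle\varphi\rangle$; (b) the subgroup $A\langle c^m\rangle$ is a semidirect product $A\ltimes\langle c^m\rangle$ in which $x^{-1}c^mx=(c^m)^{\sigma_\Pi(x,m)/m}$ for all $x\in A$; (c) $\mathrm{Av}(x)\equiv1\pmod{n/m}$ for all $x\in A$ if and only if $c^m$ is a central element of $G$.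
   Context: A skew-morphism of a finite group $A$ is a permutation $\varphi$ of $A$ with $\varphi(1_A)=1_A$ for which there is a function $\pi:A\to\mathbb{Z}_m$ ($m$ the order of $\varphi$) with $\varphi(xy)=\varphi(x)\varphi^{\pi(x)}(y)$ for all $x,y\in A$. For $f\in\{\pi,\Pi\}$, $\sigma_f(x,0)=0$ and $\sigma_f(x,k)=\sum_{i=1}^{k}f(\varphi^{i-1}(x))$ for $k>0$. The value $\sigma_\Pi(x,m)\in\mathbb{Z}_n$ is divisible by $m$, and $\mathrm{Av}(x)=\frac1m\sigma_\Pi(x,m)\in\mathbb{Z}_{n/m}$. The skew product $A\langle\varphi\rangle$ is the group on the set of formal products $x\varphi^i$ ($x\in A$, $i\in\mathbb{Z}_m$) with multiplication $x\varphi^i\cdot y\varphi^j=x\varphi^i(y)\varphi^{\sigma_\pi(y,i)+j}$. *)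

theory Defs
  imports "HOL-Algebra.Algebra" "HOL-Algebra.Multiplicative_Group"
begin

text \<open>Given A, c in G with A \<inter> \<langle>c\<rangle> = 1 and G = A\<langle>c\<rangle>, every product c x (x in A)
  is uniquely written as y c^k with y in A and 0 \<le> k < ord c.\<close>
definition skew_dec :: "('a, 'b) monoid_scheme \<Rightarrow> 'a set \<Rightarrow> 'a \<Rightarrow> 'a \<Rightarrow> 'a \<times> nat" where
  "skew_dec G A c x =
     (THE (y, k). y \<in> A \<and> k < group.ord G c \<and> c \<otimes>\<^bsub>G\<^esub> x = y \<otimes>\<^bsub>G\<^esub> (c [^]\<^bsub>G\<^esub> (k::nat)))"

definition skew_phi :: "('a, 'b) monoid_scheme \<Rightarrow> 'a set \<Rightarrow> 'a \<Rightarrow> 'a \<Rightarrow> 'a" where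
  "skew_phi G A c x = fst (skew_dec G A c x)"

text \<open>Pf(x), as representative in {0..<n}\<close>
definition skew_Pi :: "('a, 'b) monoid_scheme \<Rightarrow> 'a set \<Rightarrow> 'a \<Rightarrow> 'a \<Rightarrow> nat" where
  "skew_Pi G A c x = snd (skew_dec G A c x)"

definition perm_order :: "'a set \<Rightarrow> ('a \<Rightarrow> 'a) \<Rightarrow> nat" where
  "perm_order A \<phi> = (LEAST m. 0 < m \<and> (\<forall>x\<in>A. (\<phi> ^^ m) x = x))"

text \<open>sigma_f(x,k) = sum_{i=1}^k f(phi^(i-1)(x)), computed in the naturals
  (reduce modulo the appropriate modulus where used)\<close>
definition skew_sigma :: "('a \<Rightarrow> nat) \<Rightarrow> ('a \<Rightarrow> 'a) \<Rightarrow> 'a \<Rightarrow> nat \<Rightarrow> nat" where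
  "skew_sigma f \<phi> x k = (\<Sum>i\<in>{1..k}. f ((\<phi> ^^ (i - 1)) x))"

text \<open>Av(x) = sigma_Pi(x,m)/m in Z_{n/m}, with sigma_Pi(x,m) taken in Z_n\<close>
definition skew_Av :: "('a \<Rightarrow> nat) \<Rightarrow> ('a \<Rightarrow> 'a) \<Rightarrow> nat \<Rightarrow> nat \<Rightarrow> 'a \<Rightarrow> nat" where
  "skew_Av Pf \<phi> m n x = ((skew_sigma Pf \<phi> x m mod n) div m) mod (n div m)"

definition skew_product ::
  "('a, 'b) monoid_scheme \<Rightarrow> 'a set \<Rightarrow> ('a \<Rightarrow> 'a) \<Rightarrow> ('a \<Rightarrow> nat) \<Rightarrow> nat \<Rightarrow> ('a \<times> nat) monoid" where
  "skew_product G A \<phi> \<pi> m =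
     \<lparr> carrier = A \<times> {0..<m},
       monoid.mult = (\<lambda>(x, i) (y, j). (x \<otimes>\<^bsub>G\<^esub> (\<phi> ^^ i) y, (skew_sigma \<pi> \<phi> y i + j) mod m)),
       one = (\<one>\<^bsub>G\<^esub>, 0) \<rparr>"

end

theory Submission
  imports Defs
begin

context group begin

lemma pow_mod_ord:
  assumes a: "a \<in> carrier G" shows "a [^] (k::nat) = a [^] (k mod ord a)"
proof -
  have "a [^] k = a [^] (ord a * (k div ord a) + k mod ord a)" by (metis mult_div_mod_eq)
  also have "\<dots> = a [^] (ord a * (k div ord a)) \<otimes> a [^] (k mod ord a)"
    using nat_pow_mult[OF a] by simp
  also have "a [^] (ord a * (k div ord a)) = \<one>"
    using nat_pow_pow[OF a, of "ord a" "k div ord a"] by (simp add: a)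
  also have "\<one> \<otimes> a [^] (k mod ord a) = a [^] (k mod ord a)" by (simp add: a)
  finally show ?thesis .
qed

lemma pow_eq_iff_mod: "a \<in> carrier G \<Longrightarrow> (a [^] (i::nat) = a [^] (j::nat)) \<longleftrightarrow> i mod ord a = j mod ord a"
proof -
  assume a: "a \<in> carrier G"
  have "(a [^] (i::nat) = a [^] (j::nat)) \<longleftrightarrow> (a [^] int i = a [^] int j)" by (simp add: int_pow_int)
  also have "\<dots> \<longleftrightarrow> int (ord a) dvd (int j - int i)" using int_pow_eq[OF a] by blast
  also have "\<dots> \<longleftrightarrow> int j mod int (ord a) = int i mod int (ord a)" by (simp add: mod_eq_dvd_iff)
  also have "\<dots> \<longleftrightarrow> i mod ord a = j mod ord a" by (auto simp flip: of_nat_mod)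
  finally show ?thesis .
qed

end

lemma sigma_Suc: "skew_sigma f \<phi> x (Suc k) = skew_sigma f \<phi> x k + f ((\<phi>^^k) x)"
  by (simp add: skew_sigma_def)

lemma sigma_add: "skew_sigma f \<phi> x (a + b) = skew_sigma f \<phi> x a + skew_sigma f \<phi> ((\<phi>^^a) x) b"
proof (induction b)
  case 0 then show ?case by (simp add: skew_sigma_def)
next
  case (Suc b)
  have "(\<phi>^^(a+b)) x = (\<phi>^^b) ((\<phi>^^a) x)" by (metis add.commute comp_apply funpow_add)
  then show ?case using Suc by (simp add: sigma_Suc)
qed

lemma sigma_mult: "(\<phi>^^m) x = x \<Longrightarrow> skew_sigma f \<phi> x (m * q) = q * skew_sigma f \<phi> x m"
proof (induction q)
  case 0 then show ?case by (simp add: skew_sigma_def)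
next
  case (Suc q)
  have "skew_sigma f \<phi> x (m * Suc q) = skew_sigma f \<phi> x (m + m * q)" by simp
  also have "\<dots> = skew_sigma f \<phi> x m + skew_sigma f \<phi> x (m * q)" by (simp add: sigma_add Suc.prems)
  finally show ?case using Suc by simp
qed

lemma sigma_mod: "skew_sigma (\<lambda>x. f x mod m) \<phi> x k mod m = skew_sigma f \<phi> x k mod m"
proof (induction k)
  case 0 then show ?case by (simp add: skew_sigma_def)
next
  case (Suc k)
  have "skew_sigma (\<lambda>x. f x mod m) \<phi> x (Suc k) mod m = (skew_sigma (\<lambda>x. f x mod m) \<phi> x k mod m + f ((\<phi>^^k) x) mod m) mod m"
    by (simp add: sigma_Suc mod_add_left_eq)
  also have "\<dots> = (skew_sigma f \<phi> x k mod m + f ((\<phi>^^k) x) mod m) mod m" using Suc.IH by simp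
  also have "\<dots> = skew_sigma f \<phi> x (Suc k) mod m" by (simp add: sigma_Suc mod_add_eq)
  finally show ?case .
qed



locale skew = group G for G :: "('a, 'b) monoid_scheme" (structure) +
  fixes A :: "'a set" and c :: 'a
  assumes finG: "finite (carrier G)" and subA: "subgroup A G" and cG: "c \<in> carrier G"
    and inter: "A \<inter> generate G {c} = {\<one>}" and prodAC: "A <#> generate G {c} = carrier G"
begin

lemma n_pos: "0 < ord c" using ord_ge_1[OF finG cG] by simp

lemma gen_c: "generate G {c} = {c [^] (k::nat) | k. True}"
  using generate_pow_on_finite_carrier[OF finG cG] by simp

lemma A_car: "x \<in> A \<Longrightarrow> x \<in> carrier G"
  by (rule subgroup.mem_carrier[OF subA])

lemma decomp_ex:
  assumes g: "g \<in> carrier G" shows "\<exists>y k. y \<in> A \<and> k < ord c \<and> g = y \<otimes> c [^] (k::nat)"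
proof -
  from g prodAC obtain y h where y: "y \<in> A" and h: "h \<in> generate G {c}" and gh: "g = y \<otimes> h"
    unfolding set_mult_def by blast
  from h gen_c obtain j where j: "h = c [^] (j::nat)" by blast
  have "h = c [^] (j mod ord c)" using j pow_mod_ord[OF cG] by simp
  moreover have "j mod ord c < ord c" using n_pos by simp
  ultimately show ?thesis using y gh by blast
qed

lemma decomp_uniq:
  assumes y: "y \<in> A" and y': "y' \<in> A" and eq: "y \<otimes> c [^] (k::nat) = y' \<otimes> c [^] (k'::nat)"
  shows "y = y' \<and> k mod ord c = k' mod ord c"
proof -
  have yc: "y \<in> carrier G" "y' \<in> carrier G" using y y' A_car by auto
  have ck: "c [^] k \<in> carrier G" "c [^] k' \<in> carrier G" using cG by auto
  have "inv y' \<otimes> y \<otimes> c [^] k = inv y' \<otimes> (y' \<otimes> c [^] k')"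
    using eq yc ck by (simp add: m_assoc)
  also have "\<dots> = c [^] k'" using yc ck by (simp add: m_assoc[symmetric])
  finally have z: "inv y' \<otimes> y = c [^] k' \<otimes> inv (c [^] k)"
    using yc ck by (simp add: inv_solve_right)
  have "inv y' \<otimes> y \<in> A" using y y' subA by (simp add: subgroup.m_closed subgroup.m_inv_closed)
  moreover have "c [^] k' \<otimes> inv (c [^] k) \<in> generate G {c}"
  proof -
    have sg: "subgroup (generate G {c}) G" using generate_is_subgroup cG by simp
    have "c [^] k \<in> generate G {c}" "c [^] k' \<in> generate G {c}" using gen_c by auto
    thus ?thesis using sg by (simp add: subgroup.m_closed subgroup.m_inv_closed)
  qed
  ultimately have "inv y' \<otimes> y = \<one>" using z inter by auto
  hence yy: "y = y'" using inv_solve_left'[of "\<one>" y' y] yc by simp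
  hence "c [^] k = c [^] k'" using eq yc ck by simp
  thus ?thesis using yy pow_eq_iff_mod[OF cG] by simp
qed

definition dec :: "'a \<Rightarrow> 'a \<times> nat" where
  "dec g = (THE (y, k). y \<in> A \<and> k < ord c \<and> g = y \<otimes> c [^] (k::nat))"

lemma dec:
  assumes g: "g \<in> carrier G"
  shows "fst (dec g) \<in> A \<and> snd (dec g) < ord c \<and> g = fst (dec g) \<otimes> c [^] snd (dec g)"
proof -
  have ex1: "\<exists>!p. (case p of (y, k) \<Rightarrow> y \<in> A \<and> k < ord c \<and> g = y \<otimes> c [^] (k::nat))"
  proof -
    obtain y k where yk: "y \<in> A" "k < ord c" "g = y \<otimes> c [^] (k::nat)" using decomp_ex[OF g] by blast
    show ?thesis
    proof (rule ex1I[of _ "(y, k)"])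
      show "case (y, k) of (y, k) \<Rightarrow> y \<in> A \<and> k < ord c \<and> g = y \<otimes> c [^] k" using yk by simp
    next
      fix p assume "case p of (y, k) \<Rightarrow> y \<in> A \<and> k < ord c \<and> g = y \<otimes> c [^] k"
      then obtain y' k' where p: "p = (y', k')" "y' \<in> A" "k' < ord c" "g = y' \<otimes> c [^] k'"
        by (cases p) auto
      have e: "y' \<otimes> c [^] k' = y \<otimes> c [^] k" using p(4) yk(3) by simp
      have "y' = y \<and> k' mod ord c = k mod ord c" using decomp_uniq[OF p(2) yk(1) e] .
      thus "p = (y, k)" using p yk by simp
    qed
  qed
  have "case dec g of (y, k) \<Rightarrow> y \<in> A \<and> k < ord c \<and> g = y \<otimes> c [^] (k::nat)"
    unfolding dec_def using theI'[OF ex1] .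
  thus ?thesis by (cases "dec g") simp
qed

lemma dec_eq:
  assumes y: "y \<in> A" and g: "g = y \<otimes> c [^] (k::nat)"
  shows "dec g = (y, k mod ord c)"
proof -
  have gc: "g \<in> carrier G" using g y A_car cG by simp
  note d = dec[OF gc]
  have "fst (dec g) = y \<and> snd (dec g) mod ord c = k mod ord c"
    using decomp_uniq[of "fst (dec g)" y "snd (dec g)" k] d g y by simp
  thus ?thesis using d by (cases "dec g") simp
qed

lemma skew_dec_eq: "skew_dec G A c x = dec (c \<otimes> x)"
  by (simp add: skew_dec_def dec_def)

abbreviation "phi \<equiv> skew_phi G A c"
abbreviation "PP \<equiv> skew_Pi G A c"
abbreviation "sig \<equiv> skew_sigma PP phi"

lemma phi_Pi:
  assumes x: "x \<in> A" shows "phi x \<in> A \<and> PP x < ord c \<and> c \<otimes> x = phi x \<otimes> c [^] PP x"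
  using dec[of "c \<otimes> x"] x A_car cG by (simp add: skew_phi_def skew_Pi_def skew_dec_eq)

lemma phin_in: "x \<in> A \<Longrightarrow> (phi ^^ j) x \<in> A"
  by (induction j) (auto simp: phi_Pi)

lemma cpow_x:
  assumes x: "x \<in> A" shows "c [^] (j::nat) \<otimes> x = (phi ^^ j) x \<otimes> c [^] (sig x j)"
proof (induction j)
  case 0 then show ?case using x A_car by (simp add: skew_sigma_def)
next
  case (Suc j)
  let ?z = "(phi ^^ j) x"
  have z: "?z \<in> A" "?z \<in> carrier G" using phin_in x A_car by auto
  have pz: "phi ?z \<in> carrier G" using phi_Pi z A_car by blast
  have "c [^] Suc j \<otimes> x = c \<otimes> (c [^] j \<otimes> x)"
    unfolding nat_pow_Suc2[OF cG] using x A_car cG by (simp add: m_assoc)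
  also have "\<dots> = (c \<otimes> ?z) \<otimes> c [^] (sig x j)"
    using Suc.IH z cG by (simp add: m_assoc)
  also have "\<dots> = phi ?z \<otimes> (c [^] PP ?z \<otimes> c [^] (sig x j))"
    using phi_Pi[OF z(1)] pz cG by (simp add: m_assoc)
  also have "\<dots> = (phi ^^ Suc j) x \<otimes> c [^] (sig x (Suc j))"
    using cG by (simp add: nat_pow_mult sigma_Suc add.commute)
  finally show ?case .
qed

lemma phi_n_id: assumes x: "x \<in> A" shows "(phi ^^ ord c) x = x" and "ord c dvd sig x (ord c)"
proof -
  have "x \<otimes> c [^] (0::nat) = (phi ^^ ord c) x \<otimes> c [^] (sig x (ord c))"
    using cpow_x[OF x, of "ord c"] x A_car cG by simp
  from decomp_uniq[OF x phin_in[OF x] this]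
  have h: "x = (phi ^^ ord c) x \<and> 0 mod ord c = sig x (ord c) mod ord c" .
  show "(phi ^^ ord c) x = x" using h by simp
  show "ord c dvd sig x (ord c)" by (metis h mod_0 dvd_eq_mod_eq_0)
qed

abbreviation "m \<equiv> perm_order A phi"

lemma m_props: "0 < m" "\<forall>x\<in>A. (phi ^^ m) x = x"
proof -
  have "0 < ord c \<and> (\<forall>x\<in>A. (phi ^^ ord c) x = x)" using n_pos phi_n_id by auto
  hence "0 < m \<and> (\<forall>x\<in>A. (phi ^^ m) x = x)"
    unfolding perm_order_def by (rule LeastI)
  thus "0 < m" "\<forall>x\<in>A. (phi ^^ m) x = x" by auto
qed

lemma phi_mult: "x \<in> A \<Longrightarrow> (phi ^^ (m * q)) x = x"
proof (induction q)
  case 0 then show ?case by simp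
next
  case (Suc q)
  have "(phi ^^ (m * Suc q)) x = (phi ^^ m) ((phi ^^ (m * q)) x)"
    by (simp add: funpow_add)
  then show ?case using Suc m_props by simp
qed

lemma phi_mod: "x \<in> A \<Longrightarrow> (phi ^^ k) x = (phi ^^ (k mod m)) x"
proof -
  assume x: "x \<in> A"
  have "(phi ^^ (k mod m)) ((phi ^^ (m * (k div m))) x) = (phi ^^ (k mod m + m * (k div m))) x"
    by (simp only: funpow_add o_apply)
  also have "k mod m + m * (k div m) = k" by simp
  finally have e: "(phi ^^ (k mod m)) ((phi ^^ (m * (k div m))) x) = (phi ^^ k) x" .
  then show ?thesis using phi_mult[OF x] by simp
qed

lemma m_dvd_n: "m dvd ord c"
proof (rule ccontr)
  assume nd: "\<not> m dvd ord c"
  hence "0 < ord c mod m" using mod_eq_0_iff_dvd by fastforce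
  moreover have "\<forall>x\<in>A. (phi ^^ (ord c mod m)) x = x"
  proof
    fix x assume x: "x \<in> A"
    have "(phi ^^ (ord c mod m)) x = (phi ^^ ord c) x" using phi_mod[OF x, of "ord c"] by simp
    thus "(phi ^^ (ord c mod m)) x = x" using phi_n_id(1)[OF x] by simp
  qed
  ultimately have "m \<le> ord c mod m" unfolding perm_order_def by (simp add: Least_le)
  moreover have "ord c mod m < m" using m_props by simp
  ultimately show False by simp
qed

lemma m_le_n: "m \<le> ord c" using m_dvd_n n_pos by (simp add: dvd_imp_le)

lemma m_dvd_sig: assumes x: "x \<in> A" shows "m dvd sig x m"
proof -
  obtain q where q: "ord c = m * q" using m_dvd_n by blast
  have "q > 0" using q n_pos by simp
  have px: "(phi ^^ m) x = x" using m_props(2) x by blast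
  have "sig x (ord c) = q * sig x m" using q sigma_mult[OF px] by simp
  hence "m * q dvd sig x m * q" using phi_n_id(2)[OF x] q by (simp add: mult.commute)
  thus ?thesis using \<open>q > 0\<close> by simp
qed

lemma sig_mod_m: assumes y: "y \<in> A" shows "sig y k mod m = sig y (k mod m) mod m"
proof -
  let ?r = "k mod m" and ?q = "k div m"
  have y': "(phi ^^ ?r) y \<in> A" using phin_in y by blast
  have py: "(phi ^^ m) ((phi ^^ ?r) y) = (phi ^^ ?r) y" using m_props(2) y' by blast
  have "sig y k = sig y (?r + m * ?q)" by simp
  also have "\<dots> = sig y ?r + sig ((phi ^^ ?r) y) (m * ?q)" by (rule sigma_add)
  also have "sig ((phi ^^ ?r) y) (m * ?q) = ?q * sig ((phi ^^ ?r) y) m"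
    using sigma_mult[OF py] .
  finally have e: "sig y k = sig y ?r + ?q * sig ((phi ^^ ?r) y) m" .
  obtain t where t: "sig ((phi ^^ ?r) y) m = m * t" using m_dvd_sig[OF y'] by (auto elim: dvdE)
  have "sig y k = sig y ?r + m * (?q * t)" using e t by simp
  thus ?thesis by simp
qed

lemma conj_m: assumes x: "x \<in> A" shows "c [^] m \<otimes> x = x \<otimes> c [^] (sig x m)"
proof -
  have px: "(phi ^^ m) x = x" using m_props(2) x by blast
  show ?thesis using cpow_x[OF x, of m] px by simp
qed

end


context skew begin

definition FF :: "'a \<Rightarrow> 'a \<times> nat" where "FF g = (fst (dec g), snd (dec g) mod m)"

abbreviation "SP \<equiv> skew_product G A phi (\<lambda>x. PP x mod m) m"

lemma carrier_SP: "carrier SP = A \<times> {0..<m}" by (simp add: skew_product_def)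
lemma one_SP: "\<one>\<^bsub>SP\<^esub> = (\<one>, 0)" by (simp add: skew_product_def)
lemma mult_SP: "(x, i) \<otimes>\<^bsub>SP\<^esub> (y, j) = (x \<otimes> (phi ^^ i) y, (skew_sigma (\<lambda>x. PP x mod m) phi y i + j) mod m)"
  by (simp add: skew_product_def)

lemma dec_mult:
  assumes g1: "g1 \<in> carrier G" and g2: "g2 \<in> carrier G"
  shows "dec (g1 \<otimes> g2) = (fst (dec g1) \<otimes> (phi ^^ snd (dec g1)) (fst (dec g2)),
           (sig (fst (dec g2)) (snd (dec g1)) + snd (dec g2)) mod ord c)"
proof -
  define y1 k1 y2 k2 where "y1 = fst (dec g1)" "k1 = snd (dec g1)" "y2 = fst (dec g2)" "k2 = snd (dec g2)"
  have d1: "y1 \<in> A" "g1 = y1 \<otimes> c [^] k1" using dec[OF g1] y1_k1_y2_k2_def by auto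
  have d2: "y2 \<in> A" "g2 = y2 \<otimes> c [^] k2" using dec[OF g2] y1_k1_y2_k2_def by auto
  have yc: "y1 \<in> carrier G" "y2 \<in> carrier G" using d1 d2 A_car by auto
  have py: "(phi ^^ k1) y2 \<in> A" using phin_in d2 by blast
  hence pyc: "(phi ^^ k1) y2 \<in> carrier G" by (rule A_car)
  have "g1 \<otimes> g2 = y1 \<otimes> ((c [^] k1 \<otimes> y2) \<otimes> c [^] k2)"
    using d1 d2 yc cG by (simp add: m_assoc)
  also have "\<dots> = y1 \<otimes> (((phi ^^ k1) y2 \<otimes> c [^] (sig y2 k1)) \<otimes> c [^] k2)"
    using cpow_x[OF d2(1)] by simp
  also have "\<dots> = (y1 \<otimes> (phi ^^ k1) y2) \<otimes> c [^] (sig y2 k1 + k2)"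
    using yc pyc cG by (simp add: m_assoc nat_pow_mult)
  finally have "g1 \<otimes> g2 = (y1 \<otimes> (phi ^^ k1) y2) \<otimes> c [^] (sig y2 k1 + k2)" .
  moreover have "y1 \<otimes> (phi ^^ k1) y2 \<in> A" using d1 py subA by (simp add: subgroup.m_closed)
  ultimately have "dec (g1 \<otimes> g2) = (y1 \<otimes> (phi ^^ k1) y2, (sig y2 k1 + k2) mod ord c)"
    using dec_eq by blast
  thus ?thesis using y1_k1_y2_k2_def by simp
qed

lemma FF_mult:
  assumes g1: "g1 \<in> carrier G" and g2: "g2 \<in> carrier G"
  shows "FF (g1 \<otimes> g2) = FF g1 \<otimes>\<^bsub>SP\<^esub> FF g2"
proof -
  define y1 k1 y2 k2 where "y1 = fst (dec g1)" "k1 = snd (dec g1)" "y2 = fst (dec g2)" "k2 = snd (dec g2)"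
  have y2: "y2 \<in> A" using dec[OF g2] y1_k1_y2_k2_def by auto
  have lhs: "FF (g1 \<otimes> g2) = (y1 \<otimes> (phi ^^ k1) y2, (sig y2 k1 + k2) mod m)"
    unfolding FF_def dec_mult[OF g1 g2] y1_k1_y2_k2_def[symmetric]
    by (simp add: mod_mod_cancel[OF m_dvd_n])
  have rhs: "FF g1 \<otimes>\<^bsub>SP\<^esub> FF g2 = (y1 \<otimes> (phi ^^ (k1 mod m)) y2,
              (skew_sigma (\<lambda>x. PP x mod m) phi y2 (k1 mod m) + k2 mod m) mod m)"
    unfolding FF_def y1_k1_y2_k2_def[symmetric] by (rule mult_SP)
  have "(skew_sigma (\<lambda>x. PP x mod m) phi y2 (k1 mod m) + k2 mod m) mod m
      = (skew_sigma (\<lambda>x. PP x mod m) phi y2 (k1 mod m) mod m + k2) mod m"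
    by (simp only: mod_add_right_eq mod_add_left_eq)
  also have "\<dots> = (sig y2 (k1 mod m) mod m + k2) mod m" by (simp only: sigma_mod)
  also have "\<dots> = (sig y2 k1 mod m + k2) mod m" by (simp only: sig_mod_m[OF y2, of k1, symmetric])
  also have "\<dots> = (sig y2 k1 + k2) mod m" by (simp only: mod_add_left_eq)
  finally have e: "(skew_sigma (\<lambda>x. PP x mod m) phi y2 (k1 mod m) + k2 mod m) mod m = (sig y2 k1 + k2) mod m" .
  show ?thesis unfolding lhs rhs e using phi_mod[OF y2, of k1] by simp
qed

lemma FF_car: "g \<in> carrier G \<Longrightarrow> FF g \<in> carrier SP"
  using dec[of g] m_props(1) by (simp add: FF_def carrier_SP)

lemma FF_hom: "FF \<in> hom G SP"
  by (rule homI) (simp_all add: FF_car FF_mult)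

lemma FF_one: "FF \<one> = (\<one>, 0)"
proof -
  have "dec \<one> = (\<one>, 0 mod ord c)"
    using dec_eq[of "\<one>" "\<one>" 0] subgroup.one_closed[OF subA] cG by simp
  thus ?thesis by (simp add: FF_def)
qed

lemma FF_surj: "FF ` carrier G = carrier SP"
proof
  show "FF ` carrier G \<subseteq> carrier SP" using FF_car by blast
next
  show "carrier SP \<subseteq> FF ` carrier G"
  proof
    fix p assume "p \<in> carrier SP"
    then obtain y i where p: "p = (y, i)" "y \<in> A" "i < m" by (auto simp: carrier_SP)
    have g: "y \<otimes> c [^] i \<in> carrier G" using p A_car cG by simp
    have "i < ord c" using p m_le_n by simp
    hence "dec (y \<otimes> c [^] i) = (y, i)" using dec_eq[OF p(2), of _ i] by simp
    hence "FF (y \<otimes> c [^] i) = p" using p by (simp add: FF_def)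
    thus "p \<in> FF ` carrier G" using g by (metis image_eqI)
  qed
qed

lemma group_SP: "group SP"
proof -
  have "group (SP \<lparr> carrier := FF ` (carrier G), one := FF \<one> \<rparr>)"
    by (rule hom_imp_img_group[OF FF_hom])
  moreover have "SP \<lparr> carrier := FF ` (carrier G), one := FF \<one> \<rparr> = SP"
    unfolding FF_surj FF_one by (simp add: skew_product_def)
  ultimately show ?thesis by simp
qed

lemma group_hom_FF: "group_hom G SP FF"
  unfolding group_hom_def group_hom_axioms_def using group_SP FF_hom is_group by simp

lemma gen_cm: "generate G {c [^] m} = {c [^] (m * k) | k. True}"
proof -
  have "generate G {c [^] m} = {(c [^] m) [^] (k::nat) | k. k \<in> (UNIV :: nat set)}"
    using generate_pow_on_finite_carrier[OF finG] cG by simp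
  thus ?thesis using cG by (simp add: nat_pow_pow)
qed

lemma kernel_FF: "kernel G SP FF = generate G {c [^] m}"
proof
  show "kernel G SP FF \<subseteq> generate G {c [^] m}"
  proof
    fix g assume "g \<in> kernel G SP FF"
    hence g: "g \<in> carrier G" and f: "FF g = (\<one>, 0)" by (auto simp: kernel_def one_SP)
    have d: "g = fst (dec g) \<otimes> c [^] snd (dec g)" using dec[OF g] by simp
    have "fst (dec g) = \<one>" "snd (dec g) mod m = 0" using f by (auto simp: FF_def)
    then obtain t where "snd (dec g) = m * t" "fst (dec g) = \<one>" by (auto elim: dvdE)
    hence "g = c [^] (m * t)" using d cG by simp
    thus "g \<in> generate G {c [^] m}" unfolding gen_cm by blast
  qed
next
  show "generate G {c [^] m} \<subseteq> kernel G SP FF"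
  proof
    fix g assume "g \<in> generate G {c [^] m}"
    then obtain t where t: "g = c [^] (m * t)" unfolding gen_cm by blast
    hence g: "g \<in> carrier G" using cG by simp
    have "dec g = (\<one>, (m * t) mod ord c)"
      using dec_eq[of "\<one>" g "m * t"] subgroup.one_closed[OF subA] t cG by simp
    moreover have "m dvd (m * t) mod ord c" using m_dvd_n by (simp add: dvd_mod)
    ultimately have "FF g = (\<one>, 0)" by (simp add: FF_def)
    thus "g \<in> kernel G SP FF" using g by (simp add: kernel_def one_SP)
  qed
qed

lemma N_normal: "generate G {c [^] m} \<lhd> G"
  using group_hom.normal_kernel[OF group_hom_FF] kernel_FF by simp

lemma part_a: "generate G {c [^] m} \<lhd> G \<and> G Mod (generate G {c [^] m}) \<cong> SP"
  using N_normal group_hom.FactGroup_iso[OF group_hom_FF FF_surj] kernel_FF by simp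

end


context skew begin

lemma conj_formula:
  assumes x: "x \<in> A"
  shows "inv x \<otimes> c [^] m \<otimes> x = (c [^] m) [^] ((sig x m mod ord c) div m)"
proof -
  let ?s = "sig x m"
  have xc: "x \<in> carrier G" using x by (rule A_car)
  have "inv x \<otimes> c [^] m \<otimes> x = inv x \<otimes> (c [^] m \<otimes> x)" using xc cG by (simp add: m_assoc)
  also have "\<dots> = inv x \<otimes> (x \<otimes> c [^] ?s)" using conj_m[OF x] by simp
  also have "\<dots> = c [^] ?s" using xc cG by (simp add: m_assoc[symmetric])
  also have "\<dots> = c [^] (?s mod ord c)" using pow_mod_ord[OF cG] .
  also have "?s mod ord c = m * ((?s mod ord c) div m)"
  proof -
    have "m dvd ?s mod ord c" using m_dvd_sig[OF x] m_dvd_n by (simp add: dvd_mod)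
    thus ?thesis by simp
  qed
  also have "c [^] (m * ((?s mod ord c) div m)) = (c [^] m) [^] ((?s mod ord c) div m)"
    using cG by (simp add: nat_pow_pow)
  finally show ?thesis .
qed

lemma part_b:
  "subgroup (A <#> generate G {c [^] m}) G
   \<and> generate G {c [^] m} \<lhd> G\<lparr>carrier := A <#> generate G {c [^] m}\<rparr>
   \<and> A \<inter> generate G {c [^] m} = {\<one>}
   \<and> (\<forall>x\<in>A. inv x \<otimes> (c [^] m) \<otimes> x = (c [^] m) [^] ((sig x m mod ord c) div m))"
proof -
  let ?N = "generate G {c [^] m}"
  have comm: "A <#> ?N = ?N <#> A" by (rule commut_normal[OF subA N_normal])
  have s1: "subgroup (A <#> ?N) G" unfolding comm by (rule mult_norm_subgroup[OF N_normal subA])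
  have s2: "?N \<lhd> G\<lparr>carrier := A <#> ?N\<rparr>" unfolding comm by (rule normal_in_normal_set_mult[OF N_normal subA])
  have sub: "?N \<subseteq> generate G {c}" unfolding gen_cm gen_c by blast
  have one1: "\<one> \<in> ?N" unfolding gen_cm using cG by (metis (mono_tags, lifting) mem_Collect_eq mult_0_right nat_pow_0)
  have s3: "A \<inter> ?N = {\<one>}" using sub inter one1 subgroup.one_closed[OF subA] by blast
  show ?thesis using s1 s2 s3 conj_formula by blast
qed

lemma comm_iff:
  assumes x: "x \<in> A"
  shows "(inv x \<otimes> c [^] m \<otimes> x = c [^] m) \<longleftrightarrow> (c [^] m \<otimes> x = x \<otimes> c [^] m)"
proof -
  have xc: "x \<in> carrier G" using x by (rule A_car)
  have "(inv x \<otimes> c [^] m \<otimes> x = c [^] m) \<longleftrightarrow> (inv x \<otimes> (c [^] m \<otimes> x) = c [^] m)"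
    using xc cG by (simp add: m_assoc)
  also have "\<dots> \<longleftrightarrow> (c [^] m \<otimes> x = x \<otimes> c [^] m)"
    using inv_solve_left'[of "c [^] m" x "c [^] m \<otimes> x"] xc cG by simp
  finally show ?thesis .
qed

lemma part_c:
  "(\<forall>x\<in>A. skew_Av PP phi m (ord c) x = 1 mod (ord c div m))
   \<longleftrightarrow> (\<forall>g\<in>carrier G. (c [^] m) \<otimes> g = g \<otimes> (c [^] m))"
proof -
  have ordcm: "ord (c [^] m) = ord c div m" using ord_pow[OF cG m_dvd_n] m_props(1) by simp
  have cm: "c [^] m \<in> carrier G" using cG by simp
  have step: "skew_Av PP phi m (ord c) x = 1 mod (ord c div m) \<longleftrightarrow> (c [^] m \<otimes> x = x \<otimes> c [^] m)"
    if x: "x \<in> A" for x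
  proof -
    let ?t = "(sig x m mod ord c) div m"
    have "skew_Av PP phi m (ord c) x = ?t mod (ord c div m)" by (simp add: skew_Av_def)
    hence "skew_Av PP phi m (ord c) x = 1 mod (ord c div m) \<longleftrightarrow> ?t mod ord (c [^] m) = 1 mod ord (c [^] m)"
      using ordcm by simp
    also have "\<dots> \<longleftrightarrow> (c [^] m) [^] ?t = (c [^] m) [^] (1::nat)"
      by (rule pow_eq_iff_mod[OF cm, symmetric])
    also have p1: "(c [^] m) [^] (1::nat) = c [^] m" using cm by (rule nat_pow_eone)
    also have "((c [^] m) [^] ?t = c [^] m) \<longleftrightarrow> inv x \<otimes> c [^] m \<otimes> x = c [^] m"
      by (simp only: conj_formula[OF x])
    also have "\<dots> \<longleftrightarrow> (c [^] m \<otimes> x = x \<otimes> c [^] m)" by (rule comm_iff[OF x])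
    finally show ?thesis .
  qed
  have central: "(\<forall>g\<in>carrier G. c [^] m \<otimes> g = g \<otimes> c [^] m) \<longleftrightarrow> (\<forall>x\<in>A. c [^] m \<otimes> x = x \<otimes> c [^] m)"
  proof
    assume "\<forall>g\<in>carrier G. c [^] m \<otimes> g = g \<otimes> c [^] m"
    thus "\<forall>x\<in>A. c [^] m \<otimes> x = x \<otimes> c [^] m" using A_car by blast
  next
    assume h: "\<forall>x\<in>A. c [^] m \<otimes> x = x \<otimes> c [^] m"
    show "\<forall>g\<in>carrier G. c [^] m \<otimes> g = g \<otimes> c [^] m"
    proof
      fix g assume g: "g \<in> carrier G"
      define y k where "y = fst (dec g)" "k = snd (dec g)"
      have y: "y \<in> A" and gd: "g = y \<otimes> c [^] k" using dec[OF g] y_k_def by auto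
      have yc: "y \<in> carrier G" using y by (rule A_car)
      have hy: "c [^] m \<otimes> y = y \<otimes> c [^] m" using h y by blast
      have "c [^] m \<otimes> g = (c [^] m \<otimes> y) \<otimes> c [^] k" using gd yc cG by (simp add: m_assoc)
      also have "\<dots> = y \<otimes> (c [^] m \<otimes> c [^] k)" using hy yc cG by (simp add: m_assoc)
      also have "c [^] m \<otimes> c [^] k = c [^] k \<otimes> c [^] m" using nat_pow_comm[OF cG] .
      also have "y \<otimes> (c [^] k \<otimes> c [^] m) = g \<otimes> c [^] m" using gd yc cG by (simp add: m_assoc)
      finally show "c [^] m \<otimes> g = g \<otimes> c [^] m" .
    qed
  qed
  show ?thesis using step central by blast
qed

end

theorem proposition4p1:
  fixes G :: "('a, 'b) monoid_scheme" and A :: "'a set" and c :: 'a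
    and n m :: nat and \<phi> :: "'a \<Rightarrow> 'a" and Pf \<pi> :: "'a \<Rightarrow> nat"
  assumes "group G" and "finite (carrier G)"
    and "subgroup A G"
    and "c \<in> carrier G" and "n = group.ord G c"
    and "A \<inter> generate G {c} = {\<one>\<^bsub>G\<^esub>}"
    and "A <#>\<^bsub>G\<^esub> generate G {c} = carrier G"
    and "\<phi> = skew_phi G A c" and "Pf = skew_Pi G A c"
    and "m = perm_order A \<phi>"
    and "\<pi> = (\<lambda>x. Pf x mod m)"
  shows "(generate G {c [^]\<^bsub>G\<^esub> m} \<lhd> G
         \<and> G Mod (generate G {c [^]\<^bsub>G\<^esub> m}) \<cong> skew_product G A \<phi> \<pi> m)
         \<and> (subgroup (A <#>\<^bsub>G\<^esub> generate G {c [^]\<^bsub>G\<^esub> m}) G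
         \<and> generate G {c [^]\<^bsub>G\<^esub> m} \<lhd> G\<lparr>carrier := A <#>\<^bsub>G\<^esub> generate G {c [^]\<^bsub>G\<^esub> m}\<rparr>
         \<and> A \<inter> generate G {c [^]\<^bsub>G\<^esub> m} = {\<one>\<^bsub>G\<^esub>}
         \<and> (\<forall>x\<in>A. inv\<^bsub>G\<^esub> x \<otimes>\<^bsub>G\<^esub> (c [^]\<^bsub>G\<^esub> m) \<otimes>\<^bsub>G\<^esub> x
                  = (c [^]\<^bsub>G\<^esub> m) [^]\<^bsub>G\<^esub> ((skew_sigma Pf \<phi> x m mod n) div m)))
         \<and> ((\<forall>x\<in>A. skew_Av Pf \<phi> m n x = 1 mod (n div m))
         \<longleftrightarrow> (\<forall>g\<in>carrier G. (c [^]\<^bsub>G\<^esub> m) \<otimes>\<^bsub>G\<^esub> g = g \<otimes>\<^bsub>G\<^esub> (c [^]\<^bsub>G\<^esub> m)))"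
proof -
  interpret skew G A c
    using assms(1-4,6,7) by (simp add: skew_def skew_axioms_def)
  show ?thesis
    unfolding assms(5,11) unfolding assms(10) unfolding assms(8,9)
    using part_a part_b part_c by blast
qed


end
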